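(* Consider the discrete all-pay auction in the model with ties with $n\in\{2,3\}$ bidders whose values are drawn independently and uniformly from $X=\{0,1,\dots,x\}$, $x\ge10$. Let $\beta$ be a symmetric equilibrium bidding function. Then $\beta(x-1)\le\beta(x-2)+1$ and $\beta(x)\le\beta(x-1)+1$.
   Context: Model. There are $n$ risk-neutral bidders competing for one indivisible object. Values and bids lie in $X=\{0,1,2,\dots,x\}$. Each bidder privately learns a value drawn independently and uniformly from $X$. Each bidder submits a bid in $X$. A (pure) strategy is a bidding function $\beta:X\to X$. In the model with ties, if $m$ bidders submit the highest bid, each of them wins with probability $1/m$. In the all-pay auction, a bidder with value $v_i$ bidding $b_i$ gets expected payoff $v_i\Pr(i\text{ wins})-b_i$ (everyone pays their bid). An equilibrium is a profile of bidding functions such that each bidder's bidding function maximises their expected payoff given the others' bidding functions (a pure-strategy Bayes–Nash equilibrium) and such that no bidder uses a weakly dominated bidding function (a bidding function is weakly dominated if some other bidding function yields at least as high expected payoff against every profile of opponents' bidding functions, and strictly higher against some). A symmetric equilibrium is an equilibrium in which all bidders use the same bidding function. *)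

theory Defs
  imports Complex_Main "HOL-Library.FuncSet"
begin

text \<open>Values and bids lie in X = {0..x}. A bidding function is a map nat => nat
  sending {0..x} into {0..x} (values outside X are irrelevant).\<close>
definition strat :: "nat \<Rightarrow> (nat \<Rightarrow> nat) \<Rightarrow> bool" where
  "strat x \<beta> \<longleftrightarrow> (\<forall>v\<le>x. \<beta> v \<le> x)"

definition win :: "nat \<Rightarrow> (nat \<Rightarrow> nat \<Rightarrow> nat) \<Rightarrow> (nat \<Rightarrow> nat) \<Rightarrow> nat \<Rightarrow> real" where
  "win m gs vs b =
     (if \<forall>j<m. gs j (vs j) \<le> b
      then 1 / real (1 + card {j. j < m \<and> gs j (vs j) = b}) else 0)"

definition interim :: "nat \<Rightarrow> nat \<Rightarrow> (nat \<Rightarrow> nat \<Rightarrow> nat) \<Rightarrow> nat \<Rightarrow> nat \<Rightarrow> real" where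
  "interim x m gs v b =
     real v * ((\<Sum>vs\<in>PiE {..<m} (\<lambda>_. {0..x}). win m gs vs b) / real (x + 1) ^ m)
     - real b"

definition payoff :: "nat \<Rightarrow> nat \<Rightarrow> (nat \<Rightarrow> nat \<Rightarrow> nat) \<Rightarrow> (nat \<Rightarrow> nat) \<Rightarrow> real" where
  "payoff x m gs \<beta> = (\<Sum>v=0..x. interim x m gs v (\<beta> v)) / real (x + 1)"

definition weakly_dominated :: "nat \<Rightarrow> nat \<Rightarrow> (nat \<Rightarrow> nat) \<Rightarrow> bool" where
  "weakly_dominated x m \<beta> \<longleftrightarrow>
     (\<exists>\<beta>'. strat x \<beta>' \<and>
        (\<forall>gs. (\<forall>j<m. strat x (gs j)) \<longrightarrow> payoff x m gs \<beta>' \<ge> payoff x m gs \<beta>) \<and>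
        (\<exists>gs. (\<forall>j<m. strat x (gs j)) \<and> payoff x m gs \<beta>' > payoff x m gs \<beta>))"

definition sym_equilibrium :: "nat \<Rightarrow> nat \<Rightarrow> (nat \<Rightarrow> nat) \<Rightarrow> bool" where
  "sym_equilibrium x n \<beta> \<longleftrightarrow>
     strat x \<beta> \<and>
     (\<forall>\<beta>'. strat x \<beta>' \<longrightarrow> payoff x (n - 1) (\<lambda>_. \<beta>) \<beta>' \<le> payoff x (n - 1) (\<lambda>_. \<beta>) \<beta>) \<and>
     \<not> weakly_dominated x (n - 1) \<beta>"

end

theory Submission
  imports Defs
begin

lemma win_ge0: "win m gs vs b \<ge> 0" by (simp add: win_def)
lemma win_le1: "win m gs vs b \<le> 1" by (simp add: win_def)

lemma win_mono: assumes "b \<le> b'" shows "win m gs vs b \<le> win m gs vs b'"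
proof (cases "b = b'")
  case False
  hence lt: "b < b'" using assms by simp
  show ?thesis
  proof (cases "\<forall>j<m. gs j (vs j) \<le> b")
    case True
    hence "{j. j < m \<and> gs j (vs j) = b'} = {}" using lt by fastforce
    moreover have "\<forall>j<m. gs j (vs j) \<le> b'" using True lt by fastforce
    ultimately have "win m gs vs b' = 1" by (simp add: win_def)
    thus ?thesis using win_le1 by simp
  next
    case False
    hence "win m gs vs b = 0" by (simp add: win_def)
    thus ?thesis using win_ge0[of m gs vs b'] by simp
  qed
qed simp

lemma win_top: assumes "\<forall>j<m. gs j (vs j) < b" shows "win m gs vs b = 1"
proof -
  have "{j. j < m \<and> gs j (vs j) = b} = {}" using assms by fastforce
  thus ?thesis using assms by (simp add: win_def less_imp_le)
qed

lemma win_diff: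
  assumes "0 < b" "\<forall>j<m. gs j (vs j) \<noteq> b - 1"
  shows "win m gs vs b - win m gs vs (b - 1) \<le> real (card {j. j < m \<and> gs j (vs j) = b}) / 2"
proof (cases "\<forall>j<m. gs j (vs j) \<le> b")
  case True
  show ?thesis
  proof (cases "card {j. j < m \<and> gs j (vs j) = b} = 0")
    case True0: True
    have fin: "finite {j. j < m \<and> gs j (vs j) = b}" by simp
    hence "{j. j < m \<and> gs j (vs j) = b} = {}" using True0 by simp
    hence "\<forall>j<m. gs j (vs j) \<le> b - 1" using True by fastforce
    hence "\<forall>j<m. gs j (vs j) < b - 1" using assms(2) by fastforce
    hence "win m gs vs (b - 1) = 1" by (rule win_top)
    thus ?thesis using win_le1[of m gs vs b] by simp
  next
    case False
    hence c1: "real (card {j. j < m \<and> gs j (vs j) = b}) \<ge> 1" by linarith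
    hence "win m gs vs b \<le> 1/2" using True by (simp add: win_def)
    with c1 show ?thesis using win_ge0[of m gs vs "b-1"] by linarith
  qed
next
  case False
  hence "win m gs vs b = 0" by (simp add: win_def)
  thus ?thesis using win_ge0[of m gs vs "b-1"] by simp
qed

lemma win_gap:
  assumes "\<forall>j<m. gs j (vs j) \<le> b" "m \<le> 2"
  shows "1 - win m gs vs b \<ge> real (card {j. j < m \<and> gs j (vs j) = b}) / 3"
proof -
  define k where "k = card {j. j < m \<and> gs j (vs j) = b}"
  have "k \<le> card {..<m}" unfolding k_def by (rule card_mono) auto
  hence "k \<le> 2" using assms by simp
  hence "k = 0 \<or> k = 1 \<or> k = 2" by auto
  moreover have "win m gs vs b = 1 / real (1 + k)" using assms by (simp add: win_def k_def)
  ultimately show ?thesis unfolding k_def[symmetric] by auto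
qed

lemma card_pie: "card (PiE {..<m} (\<lambda>_. {0..x::nat})) = (x+1)^m"
  by (simp add: card_PiE)

lemma count_sum:
  "(\<Sum>vs\<in>PiE {..<m} (\<lambda>_. {0..x::nat}). real (card {j. j < m \<and> P (vs j)}))
     = real m * real (card {v\<in>{0..x}. P v}) * real (x+1)^(m-1)"
proof -
  let ?A = "PiE {..<m} (\<lambda>_. {0..x::nat})"
  have fin: "finite ?A" by (simp add: finite_PiE)
  have 1: "real (card {j. j < m \<and> P (vs j)}) = (\<Sum>j<m. of_bool (P (vs j)))" for vs
  proof -
    have "{j. j < m \<and> P (vs j)} = {..<m} \<inter> {j. P (vs j)}" by auto
    thus ?thesis by simp
  qed
  have 2: "(\<Sum>vs\<in>?A. of_bool (P (vs j)) :: real) = real (card {v\<in>{0..x}. P v}) * real (x+1)^(m-1)"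
    if "j < m" for j
  proof -
    have "?A \<inter> {vs. P (vs j)} = PiE {..<m} (\<lambda>i. if i = j then {v\<in>{0..x}. P v} else {0..x})"
      using that by (auto simp: PiE_def Pi_def)
    hence "card (?A \<inter> {vs. P (vs j)}) = (\<Prod>i<m. card (if i = j then {v\<in>{0..x}. P v} else {0..x}))"
      by (simp add: card_PiE)
    also have "\<dots> = card {v\<in>{0..x}. P v} * (\<Prod>i\<in>{..<m}-{j}. card (if i = j then {v\<in>{0..x}. P v} else {0..x}))"
      using that by (subst prod.remove[of _ j]) auto
    also have "(\<Prod>i\<in>{..<m}-{j}. card (if i = j then {v\<in>{0..x}. P v} else {0..x})) = (\<Prod>i\<in>{..<m}-{j}. x+1)"
      by (rule prod.cong) auto
    also have "\<dots> = (x+1)^(m-1)" using that by simp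
    finally show ?thesis using fin by simp
  qed
  have "(\<Sum>vs\<in>?A. real (card {j. j < m \<and> P (vs j)})) = (\<Sum>vs\<in>?A. \<Sum>j<m. of_bool (P (vs j)))"
    using 1 by simp
  also have "\<dots> = (\<Sum>j<m. \<Sum>vs\<in>?A. of_bool (P (vs j)))" by (rule sum.swap)
  also have "\<dots> = (\<Sum>j<m. real (card {v\<in>{0..x}. P v}) * real (x+1)^(m-1))"
    by (rule sum.cong) (auto simp: 2)
  finally show ?thesis by simp
qed

lemma br:
  assumes eq: "sym_equilibrium x n \<beta>" and v: "v \<le> x" and b: "b \<le> x"
  shows "interim x (n-1) (\<lambda>_. \<beta>) v b \<le> interim x (n-1) (\<lambda>_. \<beta>) v (\<beta> v)"
proof -
  let ?I = "interim x (n-1) (\<lambda>_. \<beta>)"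
  have st: "strat x \<beta>" and opt: "\<And>\<beta>'. strat x \<beta>' \<Longrightarrow> payoff x (n - 1) (\<lambda>_. \<beta>) \<beta>' \<le> payoff x (n - 1) (\<lambda>_. \<beta>) \<beta>"
    using eq unfolding sym_equilibrium_def by auto
  have "strat x (\<beta>(v := b))" using st b unfolding strat_def by auto
  hence "payoff x (n - 1) (\<lambda>_. \<beta>) (\<beta>(v := b)) \<le> payoff x (n - 1) (\<lambda>_. \<beta>) \<beta>" by (rule opt)
  hence le: "(\<Sum>w=0..x. ?I w ((\<beta>(v := b)) w)) \<le> (\<Sum>w=0..x. ?I w (\<beta> w))"
    unfolding payoff_def by (simp add: divide_le_cancel add_pos_nonneg del: fun_upd_apply)
  have vin: "v \<in> {0..x}" using v by simp
  have "(\<Sum>w=0..x. ?I w ((\<beta>(v := b)) w)) = ?I v ((\<beta>(v := b)) v) + (\<Sum>w\<in>{0..x}-{v}. ?I w ((\<beta>(v := b)) w))"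
    by (rule sum.remove[OF _ vin]) simp
  also have "?I v ((\<beta>(v := b)) v) = ?I v b" by simp
  also have "(\<Sum>w\<in>{0..x}-{v}. ?I w ((\<beta>(v := b)) w)) = (\<Sum>w\<in>{0..x}-{v}. ?I w (\<beta> w))"
    by (rule sum.cong) auto
  finally have 1: "(\<Sum>w=0..x. ?I w ((\<beta>(v := b)) w)) = ?I v b + (\<Sum>w\<in>{0..x}-{v}. ?I w (\<beta> w))" .
  have 2: "(\<Sum>w=0..x. ?I w (\<beta> w)) = ?I v (\<beta> v) + (\<Sum>w\<in>{0..x}-{v}. ?I w (\<beta> w))"
    using sum.remove[OF _ vin] by simp
  show ?thesis using le 1 2 by linarith
qed

theorem mainTheorem16:
  fixes x n :: nat and \<beta> :: "nat \<Rightarrow> nat"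
  assumes "n \<in> {2, 3}" and "x \<ge> 10" and "sym_equilibrium x n \<beta>"
  shows "\<beta> (x - 1) \<le> \<beta> (x - 2) + 1 \<and> \<beta> x \<le> \<beta> (x - 1) + 1"
proof -
  define m where "m = n - 1"
  have m12: "m = 1 \<or> m = 2" using assms(1) by (auto simp: m_def)
  define gs :: "nat \<Rightarrow> nat \<Rightarrow> nat" where "gs = (\<lambda>_. \<beta>)"
  define A where "A = PiE {..<m} (\<lambda>_. {0..x})"
  define Q where "Q b = (\<Sum>vs\<in>A. win m gs vs b)" for b
  define R where "R = real (x+1)^(m-1)"
  define N where "N = real (x+1)^m"
  have Rpos: "R > 0" unfolding R_def by simp
  have NR: "N = real (x+1) * R"
  proof -
    have "m = Suc (m-1)" using m12 by auto
    hence "real (x+1)^m = real (x+1) * real (x+1)^(m-1)" by (metis power_Suc)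
    thus ?thesis unfolding N_def R_def .
  qed
  have Npos: "N > 0" unfolding N_def by simp
  have finA: "finite A" unfolding A_def by (simp add: finite_PiE)
  have cardA: "real (card A) = N" unfolding A_def N_def using card_pie[of m x] by simp
  have gsj: "gs j w = \<beta> w" for j w unfolding gs_def by simp
  have st: "\<forall>v\<le>x. \<beta> v \<le> x" using assms(3) unfolding sym_equilibrium_def strat_def by auto
  have BR: "real v * Q b - real b * N \<le> real v * Q (\<beta> v) - real (\<beta> v) * N"
    if "v \<le> x" "b \<le> x" for v b
  proof -
    from br[OF assms(3) that]
    have "real v * (Q b / N) - b \<le> real v * (Q (\<beta> v) / N) - \<beta> v"
      unfolding interim_def Q_def A_def N_def gs_def m_def by simp
    hence "N * (real v * (Q b / N) - b) \<le> N * (real v * (Q (\<beta> v) / N) - \<beta> v)"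
      using Npos by (simp add: mult_left_mono)
    thus ?thesis using Npos by (simp add: algebra_simps)
  qed
  have Qmono: "Q b \<le> Q b'" if "b \<le> b'" for b b'
    unfolding Q_def by (rule sum_mono) (rule win_mono[OF that])
  have Qge0: "Q b \<ge> 0" for b unfolding Q_def by (rule sum_nonneg) (rule win_ge0)
  have Qle: "Q b \<le> N" for b
  proof -
    have "Q b \<le> (\<Sum>vs\<in>A. 1)" unfolding Q_def by (rule sum_mono) (rule win_le1)
    thus ?thesis using cardA by simp
  qed
  have le_v: "\<beta> v \<le> v" if "v \<le> x" for v
  proof -
    have 1: "real v * Q 0 - 0 * N \<le> real v * Q (\<beta> v) - real (\<beta> v) * N" using BR[OF that, of 0] by simp
    have 2: "real v * Q 0 \<ge> 0" using Qge0 by simp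
    have 3: "real v * Q (\<beta> v) \<le> real v * N" using Qle by (simp add: mult_left_mono)
    have "real (\<beta> v) * N \<le> real v * N" using 1 2 3 by linarith
    thus ?thesis using Npos by simp
  qed
  have mono: "\<beta> v \<le> \<beta> v'" if "v \<le> v'" "v' \<le> x" for v v'
  proof (rule ccontr)
    assume "\<not> ?thesis"
    hence lt: "\<beta> v' < \<beta> v" by simp
    hence vv: "v < v'" using that by (cases "v = v'") auto
    have vx: "v \<le> x" using that by simp
    have b1: "real v * Q (\<beta> v') - real (\<beta> v') * N \<le> real v * Q (\<beta> v) - real (\<beta> v) * N"
      using BR[OF vx] st that by simp
    have b2: "real v' * Q (\<beta> v) - real (\<beta> v) * N \<le> real v' * Q (\<beta> v') - real (\<beta> v') * N"
      using BR[OF that(2)] st vx by simp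
    have qm: "Q (\<beta> v') \<le> Q (\<beta> v)" using Qmono lt by simp
    have "(real v' - real v) * (Q (\<beta> v) - Q (\<beta> v')) \<le> 0" using b1 b2 by (simp add: algebra_simps)
    moreover have "real v' - real v > 0" using vv by simp
    ultimately have "Q (\<beta> v) - Q (\<beta> v') \<le> 0" by (simp add: mult_le_0_iff)
    hence "Q (\<beta> v) = Q (\<beta> v')" using qm by simp
    hence "real (\<beta> v) * N \<le> real (\<beta> v') * N" using b1 by simp
    hence "\<beta> v \<le> \<beta> v'" using Npos by simp
    thus False using lt by simp
  qed
  have cs: "(\<Sum>vs\<in>A. real (card {j. j < m \<and> gs j (vs j) = b})) = real m * real (card {v\<in>{0..x}. \<beta> v = b}) * R" for b
    unfolding A_def R_def gsj by (rule count_sum)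
  have diffQ: "Q b - Q (b - 1) \<le> real m * real (card {v\<in>{0..x}. \<beta> v = b}) * R / 2"
    if "0 < b" "\<forall>v\<le>x. \<beta> v \<noteq> b - 1" for b
  proof -
    have "Q b - Q (b - 1) = (\<Sum>vs\<in>A. win m gs vs b - win m gs vs (b - 1))"
      unfolding Q_def by (simp add: sum_subtractf)
    also have "\<dots> \<le> (\<Sum>vs\<in>A. real (card {j. j < m \<and> gs j (vs j) = b}) / 2)"
    proof (rule sum_mono)
      fix vs assume "vs \<in> A"
      hence "\<forall>j<m. vs j \<le> x" unfolding A_def by (auto simp: PiE_def Pi_def)
      hence "\<forall>j<m. gs j (vs j) \<noteq> b - 1" using that(2) gsj by auto
      thus "win m gs vs b - win m gs vs (b - 1) \<le> real (card {j. j < m \<and> gs j (vs j) = b}) / 2"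
        by (rule win_diff[OF that(1)])
    qed
    also have "\<dots> = real m * real (card {v\<in>{0..x}. \<beta> v = b}) * R / 2"
      using cs[of b] by (simp add: sum_divide_distrib[symmetric])
    finally show ?thesis .
  qed
  have partA: "\<beta> x \<le> \<beta> (x - 1) + 1"
  proof (rule ccontr)
    assume "\<not> ?thesis"
    define b where "b = \<beta> x"
    have hb: "\<beta> (x - 1) + 2 \<le> b" using \<open>\<not> _\<close> b_def by simp
    have low: "\<beta> v \<le> b - 2" if "v \<le> x - 1" for v
      using mono[OF that] hb assms(2) by simp
    have nob: "\<forall>v\<le>x. \<beta> v \<noteq> b - 1"
    proof (intro allI impI)
      fix v assume "v \<le> x"
      show "\<beta> v \<noteq> b - 1"
      proof (cases "v = x")
        case True thus ?thesis using hb b_def by simp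
      next
        case False
        hence "v \<le> x - 1" using \<open>v \<le> x\<close> by simp
        thus ?thesis using low[of v] hb by simp
      qed
    qed
    have T: "card {v\<in>{0..x}. \<beta> v = b} \<le> 1"
    proof -
      have "{v\<in>{0..x}. \<beta> v = b} \<subseteq> {x}"
      proof
        fix v assume h: "v \<in> {v\<in>{0..x}. \<beta> v = b}"
        show "v \<in> {x}"
        proof (rule ccontr)
          assume "v \<notin> {x}"
          hence "v \<le> x - 1" using h by auto
          thus False using low[of v] h hb by simp
        qed
      qed
      hence "card {v\<in>{0..x}. \<beta> v = b} \<le> card {x}" by (rule card_mono[rotated]) simp
      thus ?thesis by simp
    qed
    have d: "Q b - Q (b - 1) \<le> R"
    proof -
      have "Q b - Q (b - 1) \<le> real m * real (card {v\<in>{0..x}. \<beta> v = b}) * R / 2"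
        using diffQ[OF _ nob] hb by simp
      also have "\<dots> \<le> 2 * 1 * R / 2"
        using m12 T Rpos by (intro divide_right_mono mult_right_mono mult_mono) auto
      finally show ?thesis by simp
    qed
    have "b \<le> x" using st b_def by simp
    hence "real x * Q (b - 1) - real (b - 1) * N \<le> real x * Q b - real b * N"
      using BR[of x "b - 1"] b_def by simp
    moreover have "real (b - 1) = real b - 1" using hb by simp
    ultimately have "N \<le> real x * (Q b - Q (b - 1))" by (simp add: algebra_simps)
    also have "\<dots> \<le> real x * R" using d by (simp add: mult_left_mono)
    finally show False using NR Rpos by simp
  qed
  have partB: "\<beta> (x - 1) \<le> \<beta> (x - 2) + 1"
  proof (rule ccontr)
    assume "\<not> ?thesis"
    define c where "c = \<beta> (x - 1)"
    have hc: "\<beta> (x - 2) + 2 \<le> c" using \<open>\<not> _\<close> c_def by simp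
    have low: "\<beta> v \<le> c - 2" if "v \<le> x - 2" for v
      using mono[OF that] hc assms(2) by simp
    have high: "c \<le> \<beta> x" using mono[of "x-1" x] c_def by simp
    show False
    proof (cases "m = 1 \<or> c < \<beta> x")
      case True
      have nob: "\<forall>v\<le>x. \<beta> v \<noteq> c - 1"
      proof (intro allI impI)
        fix v assume "v \<le> x"
        hence "v \<le> x - 2 \<or> v = x - 1 \<or> v = x" by auto
        thus "\<beta> v \<noteq> c - 1" using low[of v] hc high c_def by auto
      qed
      have T: "real m * real (card {v\<in>{0..x}. \<beta> v = c}) \<le> 2"
      proof (cases "m = 1")
        case True
        have "{v\<in>{0..x}. \<beta> v = c} \<subseteq> {x-1, x}"
        proof
          fix v assume h: "v \<in> {v\<in>{0..x}. \<beta> v = c}"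
          hence "v \<le> x - 2 \<or> v = x - 1 \<or> v = x" by auto
          thus "v \<in> {x-1, x}" using low[of v] hc h by auto
        qed
        hence "card {v\<in>{0..x}. \<beta> v = c} \<le> card {x-1, x}" by (rule card_mono[rotated]) simp
        also have "\<dots> \<le> 2" by (simp add: card_insert_le_m1)
        finally show ?thesis using True by simp
      next
        case False
        hence cx: "c < \<beta> x" using \<open>m = 1 \<or> c < \<beta> x\<close> by simp
        have "{v\<in>{0..x}. \<beta> v = c} \<subseteq> {x-1}"
        proof
          fix v assume h: "v \<in> {v\<in>{0..x}. \<beta> v = c}"
          hence "v \<le> x - 2 \<or> v = x - 1 \<or> v = x" by auto
          thus "v \<in> {x-1}" using low[of v] hc cx h by auto
        qed
        hence "card {v\<in>{0..x}. \<beta> v = c} \<le> card {x-1}" by (rule card_mono[rotated]) simp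
        thus ?thesis using m12 False by simp
      qed
      have d: "Q c - Q (c - 1) \<le> R"
      proof -
        have "Q c - Q (c - 1) \<le> real m * real (card {v\<in>{0..x}. \<beta> v = c}) * R / 2"
          using diffQ[OF _ nob] hc by simp
        also have "\<dots> \<le> 2 * R / 2"
          using T Rpos by (intro divide_right_mono mult_right_mono) auto
        finally show ?thesis by simp
      qed
      have "c \<le> x" using st c_def by simp
      hence "real (x-1) * Q (c - 1) - real (c - 1) * N \<le> real (x-1) * Q c - real c * N"
        using BR[of "x-1" "c - 1"] c_def by simp
      moreover have "real (c - 1) = real c - 1" using hc by simp
      ultimately have "N \<le> real (x-1) * (Q c - Q (c - 1))" by (simp add: algebra_simps)
      also have "\<dots> \<le> real (x-1) * R" using d by (simp add: mult_left_mono)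
      finally have "real (x+1) * R \<le> real (x - 1) * R" using NR by simp
      hence "real (x+1) \<le> real (x-1)" using Rpos by simp
      thus False using assms(2) by simp
    next
      case False
      hence m2: "m = 2" and cx: "\<beta> x = c" using m12 high by auto
      have all: "\<forall>v\<le>x. \<beta> v \<le> c" using mono cx by auto
      have "c \<le> x - 1" using le_v[of "x-1"] c_def by simp
      hence c1x: "c + 1 \<le> x" using assms(2) by simp
      have Qtop: "Q (c + 1) = N"
      proof -
        have "Q (c + 1) = (\<Sum>vs\<in>A. 1)" unfolding Q_def
        proof (rule sum.cong)
          fix vs assume "vs \<in> A"
          hence "\<forall>j<m. vs j \<le> x" unfolding A_def by (auto simp: PiE_def Pi_def)
          hence "\<forall>j<m. gs j (vs j) < c + 1" using all gsj by (simp add: le_imp_less_Suc)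
          thus "win m gs vs (c + 1) = 1" by (rule win_top)
        qed simp
        thus ?thesis using cardA by simp
      qed
      have T: "card {v\<in>{0..x}. \<beta> v = c} \<ge> 2"
      proof -
        have "{x-1, x} \<subseteq> {v\<in>{0..x}. \<beta> v = c}" using cx c_def by auto
        hence "card {x-1, x} \<le> card {v\<in>{0..x}. \<beta> v = c}" by (rule card_mono[rotated]) simp
        moreover have "card {x-1, x} = 2" using assms(2) by simp
        ultimately show ?thesis by simp
      qed
      have gap: "N - Q c \<ge> 4 * R / 3"
      proof -
        have e1: "N - Q c = (\<Sum>vs\<in>A. 1 - win m gs vs c)"
          unfolding Q_def using cardA by (simp add: sum_subtractf)
        have e2: "(\<Sum>vs\<in>A. real (card {j. j < m \<and> gs j (vs j) = c}) / 3) \<le> (\<Sum>vs\<in>A. 1 - win m gs vs c)"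
        proof (rule sum_mono)
          fix vs assume "vs \<in> A"
          hence "\<forall>j<m. vs j \<le> x" unfolding A_def by (auto simp: PiE_def Pi_def)
          hence "\<forall>j<m. gs j (vs j) \<le> c" using all gsj by simp
          thus "real (card {j. j < m \<and> gs j (vs j) = c}) / 3 \<le> 1 - win m gs vs c"
            using win_gap m2 by simp
        qed
        have e3: "(\<Sum>vs\<in>A. real (card {j. j < m \<and> gs j (vs j) = c}) / 3)
            = real m * real (card {v\<in>{0..x}. \<beta> v = c}) * R / 3"
          using cs[of c] by (simp add: sum_divide_distrib[symmetric])
        have e4: "2 * 2 * R / 3 \<le> real m * real (card {v\<in>{0..x}. \<beta> v = c}) * R / 3"
          using T Rpos m2 by (intro divide_right_mono mult_right_mono mult_mono) auto
        show ?thesis using e1 e2 e3 e4 by linarith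
      qed
      have "real x * Q (c + 1) - real (c + 1) * N \<le> real x * Q c - real c * N"
        using BR[OF _ c1x, of x] cx by simp
      hence "real x * (N - Q c) \<le> N" using Qtop by (simp add: algebra_simps)
      moreover have "real x * (4 * R / 3) \<le> real x * (N - Q c)" using gap by (intro mult_left_mono) auto
      ultimately have "real x * (4 * R / 3) \<le> real (x+1) * R" using NR by simp
      hence "(4 * real x) * R \<le> (3 * real x + 3) * R" by (simp add: algebra_simps)
      hence "4 * real x \<le> 3 * real x + 3" using Rpos by simp
      thus False using assms(2) by simp
    qed
  qed
  show ?thesis using partA partB by simp
qed

end
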